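(* Let $q\geqslant 2$ be an integer. For $j=1,2$ let $\mathscr T_j=(V_j,\mathcal E_j)$ be a leafless, locally finite rooted directed tree with root $\mathsf{root}_j$, let $S^{(j)}_{\lambda,q}$ be the Dirichlet shift on $\mathscr T_j$, let $V^{(j)}_{\prec}$ be the set of branching vertices of $\mathscr T_j$, and let $\mathcal G^{(j)}_n:=\mathsf{Chi}^{\langle n\rangle}(\mathsf{root}_j)$ (the vertices of depth $n$ in $\mathscr T_j$), $n\in\mathbb N$. Then $S^{(1)}_{\lambda,q}$ is unitarily equivalent to $S^{(2)}_{\lambda,q}$ if and only if for every $n\in\mathbb N$, $$\sum_{v\in V^{(1)}_{\prec}\cap\mathcal G^{(1)}_n}\big(\mathrm{card}(\mathsf{Chi}(v))-1\big)=\sum_{v\in V^{(2)}_{\prec}\cap\mathcal G^{(2)}_n}\big(\mathrm{card}(\mathsf{Chi}(v))-1\big).$$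
   Context: A directed tree $\mathscr T=(V,\mathcal E)$ is a directed graph ($\mathcal E\subseteq V\times V$ without loops) with no circuits, which is connected and in which every vertex other than a root has a unique parent; it is rooted if it has a unique vertex $\mathsf{root}$ with no parent. For $v\in V$, $\mathsf{Chi}(v)=\{u:(v,u)\in\mathcal E\}$, and $\mathsf{Chi}^{\langle 0\rangle}(W)=W$, $\mathsf{Chi}^{\langle n\rangle}(W)=\bigcup_{u\in \mathsf{Chi}^{\langle n-1\rangle}(W)}\mathsf{Chi}(u)$. The tree is locally finite if every $\mathsf{Chi}(v)$ is finite, leafless if every $\mathsf{Chi}(v)$ is nonempty; $V$ is assumed countably infinite. The depth $n_v$ of $v$ is the unique $n$ with $v\in\mathsf{Chi}^{\langle n\rangle}(\mathsf{root})$. The set of branching vertices is $V_\prec=\{v\in V:\mathrm{card}(\mathsf{Chi}(v))\geqslant 2\}$. On $\ell^2(V)$ with orthonormal basis $\{e_u\}_{u\in V}$, the weighted shift with weights $\{\lambda_u\}_{u\ne\mathsf{root}}$ is the operator $S_\lambda e_v=\sum_{u\in\mathsf{Chi}(v)}\lambda_u e_u$. For real $q\geqslant 1$, the Dirichlet shift $S_{\lambda,q}$ on $\mathscr T$ is the (bounded) weighted shift with weights $\lambda_{u,q}=\frac{1}{\sqrt{\mathrm{card}(\mathsf{Chi}(v))}}\sqrt{\frac{n_v+q}{n_v+1}}$ for $u\in\mathsf{Chi}(v)$, $v\in V$. *)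

theory Defs
  imports "HOL-Analysis.Analysis"
begin

definition Chi :: "('a \<times> 'a) set \<Rightarrow> 'a \<Rightarrow> 'a set" where
  "Chi E v = {u. (v, u) \<in> E}"

fun Chi_pow :: "('a \<times> 'a) set \<Rightarrow> nat \<Rightarrow> 'a set \<Rightarrow> 'a set" where
  "Chi_pow E 0 W = W"
| "Chi_pow E (Suc n) W = (\<Union>u\<in>Chi_pow E n W. Chi E u)"

definition rooted_tree :: "'a set \<Rightarrow> ('a \<times> 'a) set \<Rightarrow> 'a \<Rightarrow> bool" where
  "rooted_tree V E r \<longleftrightarrow>
     E \<subseteq> V \<times> V \<and> (\<forall>v. (v, v) \<notin> E) \<and> acyclic E \<and>
     countable V \<and> infinite V \<and>
     r \<in> V \<and> (\<forall>v. (v, r) \<notin> E) \<and>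
     (\<forall>u\<in>V - {r}. \<exists>!v. (v, u) \<in> E) \<and>
     (\<forall>u\<in>V. (r, u) \<in> E\<^sup>*)"

definition locally_finite :: "'a set \<Rightarrow> ('a \<times> 'a) set \<Rightarrow> bool" where
  "locally_finite V E \<longleftrightarrow> (\<forall>v\<in>V. finite (Chi E v))"

definition leafless :: "'a set \<Rightarrow> ('a \<times> 'a) set \<Rightarrow> bool" where
  "leafless V E \<longleftrightarrow> (\<forall>v\<in>V. Chi E v \<noteq> {})"

definition depth :: "('a \<times> 'a) set \<Rightarrow> 'a \<Rightarrow> 'a \<Rightarrow> nat" where
  "depth E r v = (THE n. v \<in> Chi_pow E n {r})"

definition branching :: "'a set \<Rightarrow> ('a \<times> 'a) set \<Rightarrow> 'a set" where
  "branching V E = {v\<in>V. card (Chi E v) \<ge> 2}"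

text \<open>Dirichlet weight of the vertex u, where u is a child of v.\<close>
definition dirichlet_weight :: "('a \<times> 'a) set \<Rightarrow> 'a \<Rightarrow> real \<Rightarrow> 'a \<Rightarrow> 'a \<Rightarrow> real" where
  "dirichlet_weight E r q v u =
     (1 / sqrt (real (card (Chi E v)))) *
     sqrt ((real (depth E r v) + q) / (real (depth E r v) + 1))"

text \<open>The Hilbert space \<open>\<ell>\<^sup>2(V)\<close> as complex functions supported on V.\<close>
definition l2 :: "'a set \<Rightarrow> ('a \<Rightarrow> complex) set" where
  "l2 V = {f. (\<forall>v. v \<notin> V \<longrightarrow> f v = 0) \<and> (\<lambda>v. (cmod (f v))\<^sup>2) summable_on V}"

definition l2_norm :: "'a set \<Rightarrow> ('a \<Rightarrow> complex) \<Rightarrow> real" where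
  "l2_norm V f = sqrt (\<Sum>\<^sub>\<infinity>v\<in>V. (cmod (f v))\<^sup>2)"

text \<open>Dirichlet shift: \<open>S e_v = \<Sum>_{u\<in>Chi v} \<lambda>_u e_u\<close>, i.e. on coordinates
  \<open>(S f)(u) = \<Sum>_{v parent of u} \<lambda>_u f(v)\<close> (the parent is unique, none for the root).\<close>
definition dirichlet_shift ::
  "'a set \<Rightarrow> ('a \<times> 'a) set \<Rightarrow> 'a \<Rightarrow> real \<Rightarrow> ('a \<Rightarrow> complex) \<Rightarrow> ('a \<Rightarrow> complex)" where
  "dirichlet_shift V E r q f = (\<lambda>u. if u \<in> V then
      (\<Sum>v\<in>{v\<in>V. (v, u) \<in> E}. complex_of_real (dirichlet_weight E r q v u) * f v) else 0)"

definition unitarily_equivalent ::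
  "'a set \<Rightarrow> (('a \<Rightarrow> complex) \<Rightarrow> ('a \<Rightarrow> complex)) \<Rightarrow>
   'b set \<Rightarrow> (('b \<Rightarrow> complex) \<Rightarrow> ('b \<Rightarrow> complex)) \<Rightarrow> bool" where
  "unitarily_equivalent V1 S1 V2 S2 \<longleftrightarrow>
     (\<exists>U. bij_betw U (l2 V1) (l2 V2) \<and>
        (\<forall>f\<in>l2 V1. \<forall>g\<in>l2 V1. U (\<lambda>v. f v + g v) = (\<lambda>w. U f w + U g w)) \<and>
        (\<forall>f\<in>l2 V1. \<forall>c. U (\<lambda>v. c * f v) = (\<lambda>w. c * U f w)) \<and>
        (\<forall>f\<in>l2 V1. l2_norm V2 (U f) = l2_norm V1 f) \<and>
        (\<forall>f\<in>l2 V1. U (S1 f) = S2 (U f)))"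

end

theory Submission
  imports Defs
begin



definition ip :: "'a set \<Rightarrow> ('a \<Rightarrow> complex) \<Rightarrow> ('a \<Rightarrow> complex) \<Rightarrow> complex" where
  "ip X f g = (\<Sum>x\<in>X. f x * cnj (g x))"

lemma ip_sum_left: "ip X (\<lambda>x. \<Sum>i\<in>I. c i * h i x) g = (\<Sum>i\<in>I. c i * ip X (h i) g)"
proof -
  have "ip X (\<lambda>x. \<Sum>i\<in>I. c i * h i x) g = (\<Sum>x\<in>X. \<Sum>i\<in>I. c i * (h i x * cnj (g x)))"
    unfolding ip_def sum_distrib_right by (simp add: mult.assoc)
  also have "\<dots> = (\<Sum>i\<in>I. \<Sum>x\<in>X. c i * (h i x * cnj (g x)))" by (rule sum.swap)
  finally show ?thesis unfolding ip_def sum_distrib_left .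
qed

lemma ip_sum_right: "ip X g (\<lambda>x. \<Sum>i\<in>I. c i * h i x) = (\<Sum>i\<in>I. cnj (c i) * ip X g (h i))"
proof -
  have "ip X g (\<lambda>x. \<Sum>i\<in>I. c i * h i x) = (\<Sum>x\<in>X. \<Sum>i\<in>I. cnj (c i) * (g x * cnj (h i x)))"
    unfolding ip_def cnj_sum sum_distrib_left by (simp add: algebra_simps)
  also have "\<dots> = (\<Sum>i\<in>I. \<Sum>x\<in>X. cnj (c i) * (g x * cnj (h i x)))" by (rule sum.swap)
  finally show ?thesis unfolding ip_def sum_distrib_left .
qed

lemma ip_diff_left: "ip X (\<lambda>x. f x - h x) g = ip X f g - ip X h g"
  unfolding ip_def by (simp add: algebra_simps sum_subtractf)

lemma ip_diff_right: "ip X g (\<lambda>x. f x - h x) = ip X g f - ip X g h"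
  unfolding ip_def by (simp add: algebra_simps sum_subtractf)

lemma ip_cnj: "cnj (ip X f g) = ip X g f"
  unfolding ip_def by (simp add: mult.commute)

lemma ip_self: "ip X f f = complex_of_real (\<Sum>x\<in>X. (cmod (f x))\<^sup>2)"
  unfolding ip_def by (simp only: of_real_sum complex_norm_square)

lemma ip_self_zero: assumes "finite X" "ip X f f = 0" "x \<in> X" shows "f x = 0"
proof -
  have "(\<Sum>x\<in>X. (cmod (f x))\<^sup>2) = 0" using assms(2) unfolding ip_self by (simp only: of_real_eq_0_iff)
  hence "(cmod (f x))\<^sup>2 = 0" using assms(1,3) by (subst (asm) sum_nonneg_eq_0_iff) auto
  thus ?thesis by simp
qed

lemma ip_cong: "(\<And>x. x \<in> X \<Longrightarrow> f x = f' x) \<Longrightarrow> (\<And>x. x \<in> X \<Longrightarrow> g x = g' x) \<Longrightarrow> ip X f g = ip X f' g'"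
  unfolding ip_def by (rule sum.cong) auto

definition ON :: "'a set \<Rightarrow> 'i set \<Rightarrow> ('i \<Rightarrow> 'a \<Rightarrow> complex) \<Rightarrow> bool" where
  "ON X I b \<longleftrightarrow> (\<forall>i\<in>I. \<forall>j\<in>I. ip X (b i) (b j) = (if i = j then 1 else 0))"

lemma ON_expand:
  assumes "ON X I b" "finite I" "j \<in> I" "J \<subseteq> I"
  shows "ip X (\<lambda>x. \<Sum>i\<in>J. c i * b i x) (b j) = (if j \<in> J then c j else 0)"
proof -
  have "ip X (\<lambda>x. \<Sum>i\<in>J. c i * b i x) (b j) = (\<Sum>i\<in>J. c i * (if i = j then 1 else 0))"
    unfolding ip_sum_left using assms by (intro sum.cong) (auto simp: ON_def)
  also have "\<dots> = (\<Sum>i\<in>J. if j = i then c i else 0)"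
    by (rule sum.cong) auto
  also have "\<dots> = (if j \<in> J then c j else 0)"
    using assms finite_subset[of J I] by (simp add: sum.delta)
  finally show ?thesis .
qed

lemma bessel:
  fixes f :: "'a \<Rightarrow> complex"
  assumes "ON X I b" "finite I"
  defines "c \<equiv> \<lambda>i. ip X f (b i)"
  defines "rr \<equiv> \<lambda>x. f x - (\<Sum>i\<in>I. c i * b i x)"
  shows "\<And>j. j \<in> I \<Longrightarrow> ip X rr (b j) = 0"
    and "ip X rr rr = ip X f f - complex_of_real (\<Sum>i\<in>I. (cmod (c i))\<^sup>2)"
proof -
  show o: "ip X rr (b j) = 0" if "j \<in> I" for j
    unfolding rr_def ip_diff_left using ON_expand[OF assms(1,2) that, of I c] that by (simp add: c_def)
  have "ip X rr rr = ip X rr f - ip X rr (\<lambda>x. \<Sum>i\<in>I. c i * b i x)"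
    unfolding rr_def by (rule ip_diff_right)
  also have "ip X rr (\<lambda>x. \<Sum>i\<in>I. c i * b i x) = 0"
    unfolding ip_sum_right by (rule sum.neutral) (simp add: o)
  also have "ip X rr f = ip X f f - (\<Sum>i\<in>I. c i * ip X (b i) f)"
    unfolding rr_def ip_diff_left ip_sum_left ..
  also have "(\<Sum>i\<in>I. c i * ip X (b i) f) = complex_of_real (\<Sum>i\<in>I. (cmod (c i))\<^sup>2)"
    unfolding of_real_sum complex_norm_square by (rule sum.cong) (simp_all add: c_def ip_cnj)
  finally show "ip X rr rr = ip X f f - complex_of_real (\<Sum>i\<in>I. (cmod (c i))\<^sup>2)" by simp
qed

definition pw :: "'i set \<Rightarrow> ('i \<Rightarrow> 'a \<Rightarrow> complex) \<Rightarrow> 'a \<Rightarrow> real" where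
  "pw I b y = (\<Sum>i\<in>I. (cmod (b i y))\<^sup>2)"

lemma ip_delta: "finite X \<Longrightarrow> y \<in> X \<Longrightarrow> ip X (\<lambda>x. if x = y then 1 else 0) g = cnj (g y)"
proof -
  assume X: "finite X" and y: "y \<in> X"
  have "ip X (\<lambda>x. if x = y then 1 else 0) g = (\<Sum>x\<in>X. if x = y then cnj (g y) else 0)"
    unfolding ip_def by (rule sum.cong) auto
  also have "\<dots> = cnj (g y)" using X y by (simp add: sum.delta')
  finally show ?thesis .
qed

lemma pw_props:
  assumes X: "finite X" and ON: "ON X I b" and I: "finite I" and y: "y \<in> X"
  shows "pw I b y \<le> 1"
    and "pw I b y = 1 \<Longrightarrow> z \<in> X \<Longrightarrow> (if z = y then 1 else 0) = (\<Sum>i\<in>I. cnj (b i y) * b i z)"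
    and "pw I b y < 1 \<Longrightarrow> \<exists>v. ON X (insert k I) (b(k := v))"
    and "pw I b y = 1 \<Longrightarrow> True"
proof -
  define e where "e = (\<lambda>x. if x = y then 1 else (0::complex))"
  define rr where "rr = (\<lambda>x. e x - (\<Sum>i\<in>I. cnj (b i y) * b i x))"
  have c: "ip X e (b i) = cnj (b i y)" for i unfolding e_def using X y by (rule ip_delta)
  have ee: "ip X e e = 1" unfolding e_def using X y by (subst ip_delta) auto
  have orth: "\<And>j. j \<in> I \<Longrightarrow> ip X rr (b j) = 0"
    using bessel(1)[OF ON I, of _ e] unfolding rr_def c by blast
  have "ip X rr rr = 1 - complex_of_real (pw I b y)"
    using bessel(2)[OF ON I, of e] unfolding rr_def ee c pw_def by simp
  moreover obtain N where N: "ip X rr rr = complex_of_real N" "N \<ge> 0"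
    using ip_self[of X rr] by (metis sum_nonneg zero_le_power2)
  ultimately have N': "N = 1 - pw I b y"
    by (metis of_real_1 of_real_diff of_real_eq_iff)
  show "pw I b y \<le> 1" using N N' by simp
  show "(if z = y then 1 else 0) = (\<Sum>i\<in>I. cnj (b i y) * b i z)"
    if "pw I b y = 1" "z \<in> X"
  proof -
    have "ip X rr rr = 0" using N N' that by simp
    hence "rr z = 0" using ip_self_zero[OF X _ that(2)] by blast
    thus ?thesis unfolding rr_def e_def by simp
  qed
  show "\<exists>v. ON X (insert k I) (b(k := v))" if lt: "pw I b y < 1"
  proof (cases "k \<in> I")
    case True
    thus ?thesis using ON by (intro exI[of _ "b k"]) (auto simp: insert_absorb)
  next
    case False
    have Npos: "N > 0" using N' lt by simp
    define v where "v = (\<lambda>x. complex_of_real (1 / sqrt N) * rr x)"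
    have vv: "ip X v v = 1"
    proof -
      have "ip X v v = complex_of_real (1 / sqrt N) * cnj (complex_of_real (1 / sqrt N)) * ip X rr rr"
        unfolding v_def ip_def by (simp add: sum_distrib_left sum_divide_distrib algebra_simps)
      also have "\<dots> = complex_of_real ((1 / sqrt N) * (1 / sqrt N) * N)" using N by (simp del: of_real_mult add: of_real_mult[symmetric])
      also have "(1 / sqrt N) * (1 / sqrt N) * N = 1" using Npos
        by (simp add: field_simps)
      finally show ?thesis by simp
    qed
    have vb: "ip X v (b j) = 0" if "j \<in> I" for j
    proof -
      have "ip X v (b j) = complex_of_real (1 / sqrt N) * ip X rr (b j)"
        unfolding v_def ip_def by (simp add: sum_distrib_left algebra_simps)
      thus ?thesis using orth that by simp
    qed
    have bv: "ip X (b j) v = 0" if "j \<in> I" for j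
      using vb[OF that] ip_cnj[of X v "b j"] by simp
    show ?thesis
      by (rule exI[of _ v]) (use ON False vv vb bv in \<open>auto simp: ON_def\<close>)
  qed
qed simp

lemma sum_pw:
  assumes X: "finite X" and ON: "ON X I b" and I: "finite I"
  shows "(\<Sum>y\<in>X. pw I b y) = real (card I)"
proof -
  have "(\<Sum>y\<in>X. pw I b y) = (\<Sum>i\<in>I. \<Sum>y\<in>X. (cmod (b i y))\<^sup>2)"
    unfolding pw_def by (rule sum.swap)
  also have "\<dots> = (\<Sum>i\<in>I. 1)"
  proof (rule sum.cong)
    fix i assume i: "i \<in> I"
    have "complex_of_real (\<Sum>y\<in>X. (cmod (b i y))\<^sup>2) = 1"
      using ON i ip_self[of X "b i"] by (auto simp: ON_def)
    thus "(\<Sum>y\<in>X. (cmod (b i y))\<^sup>2) = 1" by (metis of_real_eq_1_iff)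
  qed simp
  finally show ?thesis by simp
qed

lemma ON_card_le:
  assumes X: "finite X" and ON: "ON X I b" and I: "finite I"
  shows "card I \<le> card X"
proof -
  have "real (card I) = (\<Sum>y\<in>X. pw I b y)" using sum_pw[OF assms] by simp
  also have "\<dots> \<le> (\<Sum>y\<in>X. 1)" by (rule sum_mono) (use pw_props(1)[OF X ON I] in auto)
  finally show ?thesis by simp
qed

lemma ON_complete:
  assumes X: "finite X" and ON: "ON X I b" and I: "finite I" and cd: "card I = card X"
    and z: "z \<in> X"
  shows "f z = (\<Sum>i\<in>I. ip X f (b i) * b i z)"
proof -
  have "(\<Sum>y\<in>X. 1 - pw I b y) = 0"
    using sum_pw[OF X ON I] cd by (simp add: sum_subtractf)
  hence all1: "\<forall>y\<in>X. 1 - pw I b y = 0"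
    using X pw_props(1)[OF X ON I] by (subst (asm) sum_nonneg_eq_0_iff) auto
  have "f z = (\<Sum>y\<in>X. f y * (if z = y then 1 else 0))"
    using X z by (simp add: if_distrib sum.delta cong: if_cong)
  also have "\<dots> = (\<Sum>y\<in>X. f y * (\<Sum>i\<in>I. cnj (b i y) * b i z))"
  proof (rule sum.cong)
    fix y assume y: "y \<in> X"
    have "pw I b y = 1" using all1 y by simp
    from pw_props(2)[OF X ON I y this z] show "f y * (if z = y then 1 else 0) = f y * (\<Sum>i\<in>I. cnj (b i y) * b i z)"
      by (auto split: if_splits)
  qed simp
  also have "\<dots> = (\<Sum>y\<in>X. \<Sum>i\<in>I. f y * cnj (b i y) * b i z)"
    by (simp add: sum_distrib_left mult.assoc)
  also have "\<dots> = (\<Sum>i\<in>I. \<Sum>y\<in>X. f y * cnj (b i y) * b i z)" by (rule sum.swap)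
  also have "\<dots> = (\<Sum>i\<in>I. ip X f (b i) * b i z)"
    unfolding ip_def by (simp add: sum_distrib_right)
  finally show ?thesis .
qed

lemma ON_extend1:
  assumes X: "finite X" and ON: "ON X {..<k} b" and lt: "k < card X"
  shows "\<exists>v. ON X {..<Suc k} (b(k := v))"
proof -
  have "(\<Sum>y\<in>X. pw {..<k} b y) < (\<Sum>y\<in>X. 1)" using sum_pw[OF X ON] lt by simp
  then obtain y where y: "y \<in> X" "pw {..<k} b y < 1"
    by (meson not_less sum_mono)
  from pw_props(3)[OF X ON _ y, of k] show ?thesis by (simp add: lessThan_Suc)
qed

lemma ON_extend:
  assumes X: "finite X" and ON: "ON X {..<k} b" and le: "k \<le> card X"
  shows "\<exists>b'. ON X {..<card X} b' \<and> (\<forall>i<k. b' i = b i)"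
  using ON le
proof (induction "card X - k" arbitrary: k b)
  case 0
  hence "k = card X" by simp
  thus ?case using 0 by auto
next
  case (Suc d)
  then obtain v where v: "ON X {..<Suc k} (b(k := v))" using ON_extend1[OF X] by fastforce
  have "\<exists>b'. ON X {..<card X} b' \<and> (\<forall>i<Suc k. b' i = (b(k := v)) i)"
    using Suc.hyps(1)[of "Suc k" "b(k:=v)"] Suc.hyps(2) Suc.prems v by auto
  then obtain b' where "ON X {..<card X} b'" "\<forall>i<Suc k. b' i = (b(k := v)) i" by blast
  thus ?case by (intro exI[of _ b']) auto
qed




locale dtree =
  fixes V :: "'a set" and E :: "('a \<times> 'a) set" and r :: 'a and q :: real
  assumes rt: "rooted_tree V E r" and lfl: "leafless V E" and lfin: "locally_finite V E"
    and q1: "q > 1"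
begin

definition G where "G n = Chi_pow E n {r}"
definition kk where "kk v = card (Chi E v)"
definition a :: "nat \<Rightarrow> real" where "a n = (real n + q) / (real n + 1)"
definition S where "S = dirichlet_shift V E r q"
definition lev where "lev f n = (\<Sum>v\<in>G n. (cmod (f v))\<^sup>2)"

lemma E_sub: "(x, y) \<in> E \<Longrightarrow> x \<in> V \<and> y \<in> V"
  using rt unfolding rooted_tree_def by auto

lemma r_V: "r \<in> V" using rt unfolding rooted_tree_def by auto

lemma no_into_r: "(v, r) \<notin> E" using rt unfolding rooted_tree_def by auto

lemma parent_unique: "(p, u) \<in> E \<Longrightarrow> (p', u) \<in> E \<Longrightarrow> p = p'"
proof -
  assume pu: "(p, u) \<in> E" and p'u: "(p', u) \<in> E"
  have "u \<in> V - {r}" using pu E_sub no_into_r by fastforce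
  hence "\<exists>!v. (v, u) \<in> E" using rt unfolding rooted_tree_def by blast
  thus ?thesis using pu p'u by blast
qed

lemma G_0[simp]: "G 0 = {r}" by (simp add: G_def)

lemma G_Suc: "u \<in> G (Suc n) \<longleftrightarrow> (\<exists>p\<in>G n. (p, u) \<in> E)"
  by (simp add: G_def Chi_def)

lemma G_Suc_eq: "G (Suc n) = (\<Union>p\<in>G n. Chi E p)"
  by (simp add: G_def)

lemma Chi_sub: "p \<in> G n \<Longrightarrow> Chi E p \<subseteq> G (Suc n)"
  by (auto simp: G_Suc Chi_def)

lemma G_sub: "G n \<subseteq> V"
proof (induction n)
  case 0 thus ?case using r_V by simp
next
  case (Suc n) thus ?case using E_sub by (auto simp: G_Suc)
qed

lemma kk_pos: "v \<in> V \<Longrightarrow> kk v \<ge> 1" and Chi_fin: "v \<in> V \<Longrightarrow> finite (Chi E v)"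
  using lfl lfin unfolding leafless_def locally_finite_def kk_def
  by (auto simp: Suc_le_eq card_gt_0_iff)

lemma G_fin: "finite (G n)"
proof (induction n)
  case 0 thus ?case by simp
next
  case (Suc n) thus ?case using Chi_fin G_sub unfolding G_Suc_eq by blast
qed

lemma G_unique: "v \<in> G n \<Longrightarrow> v \<in> G m \<Longrightarrow> n = m"
proof (induction n arbitrary: v m)
  case 0
  thus ?case using no_into_r by (cases m) (auto simp: G_Suc)
next
  case (Suc n)
  then obtain p where p: "p \<in> G n" "(p, v) \<in> E" by (auto simp: G_Suc)
  show ?case
  proof (cases m)
    case 0 thus ?thesis using Suc.prems p no_into_r by auto
  next
    case (Suc m')
    then obtain p' where p': "p' \<in> G m'" "(p', v) \<in> E" using Suc.prems by (auto simp: G_Suc)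
    have "p = p'" using parent_unique p p' by blast
    thus ?thesis using Suc.IH p p' Suc by blast
  qed
qed

lemma G_disj: "n \<noteq> m \<Longrightarrow> G n \<inter> G m = {}"
  using G_unique by blast

lemma V_cover: "v \<in> V \<Longrightarrow> \<exists>n. v \<in> G n"
proof -
  assume "v \<in> V"
  hence "(r, v) \<in> E\<^sup>*" using rt unfolding rooted_tree_def by blast
  thus ?thesis
  proof (induction rule: rtrancl_induct)
    case base thus ?case by (auto intro: exI[of _ 0])
  next
    case (step y z)
    then obtain n where "y \<in> G n" by blast
    hence "z \<in> G (Suc n)" using step(2) by (auto simp: G_Suc)
    thus ?case by blast
  qed
qed

lemma V_eq: "V = (\<Union>n. G n)" using V_cover G_sub by blast

lemma depth_eq: "v \<in> G n \<Longrightarrow> depth E r v = n"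
  unfolding depth_def G_def[symmetric] using G_unique by blast

lemma G_ne: "G n \<noteq> {}"
proof (induction n)
  case 0 thus ?case by simp
next
  case (Suc n)
  then obtain p where p: "p \<in> G n" by blast
  hence "Chi E p \<noteq> {}" using lfl G_sub unfolding leafless_def by blast
  thus ?case using Chi_sub[OF p] by blast
qed

definition wt :: "'a \<Rightarrow> real" where
  "wt p = (1 / sqrt (real (kk p))) * sqrt ((real (depth E r p) + q) / (real (depth E r p) + 1))"

lemma parents_Suc: "u \<in> G (Suc n) \<Longrightarrow> (p, u) \<in> E \<Longrightarrow> {v \<in> V. (v, u) \<in> E} = {p}"
  using parent_unique E_sub by blast

lemma S_Suc: "u \<in> G (Suc n) \<Longrightarrow> (p, u) \<in> E \<Longrightarrow> S f u = complex_of_real (wt p) * f p"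
proof -
  assume u: "u \<in> G (Suc n)" and pu: "(p, u) \<in> E"
  have "u \<in> V" using u G_sub by blast
  thus ?thesis unfolding S_def dirichlet_shift_def parents_Suc[OF u pu]
    by (simp add: wt_def dirichlet_weight_def kk_def)
qed

lemma S_r: "S f r = 0"
  unfolding S_def dirichlet_shift_def using no_into_r by simp

lemma S_out: "u \<notin> V \<Longrightarrow> S f u = 0"
  unfolding S_def dirichlet_shift_def by simp

lemma wt_sq: "p \<in> G n \<Longrightarrow> real (kk p) * (wt p)\<^sup>2 = a n"
proof -
  assume p: "p \<in> G n"
  have k: "kk p \<ge> 1" using kk_pos G_sub p by blast
  have "(real n + q) / (real n + 1) \<ge> 0" using q1 by simp
  thus ?thesis using k unfolding wt_def depth_eq[OF p] a_def
    by (simp add: power_mult_distrib power_divide)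
qed

lemma a_pos: "a n > 0" using q1 unfolding a_def by simp

lemma a_inj: "a n = a m \<Longrightarrow> n = m"
proof -
  assume "a n = a m"
  hence "(real n + q) * (real m + 1) = (real m + q) * (real n + 1)"
    unfolding a_def by (simp add: field_simps)
  hence "(q - 1) * (real n - real m) = 0" by (simp add: algebra_simps)
  thus "n = m" using q1 by simp
qed

lemma Chi_disj: "p \<noteq> p' \<Longrightarrow> Chi E p \<inter> Chi E p' = {}"
  using parent_unique by (auto simp: Chi_def)

lemma sum_Suc: "(\<Sum>u\<in>G (Suc n). F u) = (\<Sum>p\<in>G n. \<Sum>u\<in>Chi E p. F u)"
  unfolding G_Suc_eq
  by (rule sum.UNION_disjoint) (use G_fin Chi_fin G_sub Chi_disj in auto)

lemma card_Suc: "card (G (Suc n)) = (\<Sum>p\<in>G n. kk p)"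
  unfolding G_Suc_eq kk_def
  by (rule card_UN_disjoint) (use G_fin Chi_fin G_sub Chi_disj in auto)

lemma key: "ip (G (Suc n)) (S f) (S g) = complex_of_real (a n) * ip (G n) f g"
proof -
  have "ip (G (Suc n)) (S f) (S g) = (\<Sum>p\<in>G n. \<Sum>u\<in>Chi E p. S f u * cnj (S g u))"
    unfolding ip_def by (rule sum_Suc)
  also have "\<dots> = (\<Sum>p\<in>G n. complex_of_real (a n) * (f p * cnj (g p)))"
  proof (rule sum.cong)
    fix p assume p: "p \<in> G n"
    have "(\<Sum>u\<in>Chi E p. S f u * cnj (S g u)) = (\<Sum>u\<in>Chi E p. complex_of_real ((wt p)\<^sup>2) * (f p * cnj (g p)))"
    proof (rule sum.cong)
      fix u assume "u \<in> Chi E p"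
      hence u: "u \<in> G (Suc n)" "(p, u) \<in> E" using Chi_sub[OF p] by (auto simp: Chi_def)
      show "S f u * cnj (S g u) = complex_of_real ((wt p)\<^sup>2) * (f p * cnj (g p))"
        unfolding S_Suc[OF u] by (simp add: power2_eq_square)
    qed simp
    also have "\<dots> = complex_of_real (real (kk p) * (wt p)\<^sup>2) * (f p * cnj (g p))"
      by (simp add: kk_def)
    finally show "(\<Sum>u\<in>Chi E p. S f u * cnj (S g u)) = complex_of_real (a n) * (f p * cnj (g p))"
      using wt_sq[OF p] by simp
  qed simp
  finally show ?thesis unfolding ip_def by (simp add: sum_distrib_left)
qed

lemma branch_sum: "(\<Sum>v\<in>branching V E \<inter> G n. kk v - 1) = card (G (Suc n)) - card (G n)"
proof -
  have "(\<Sum>v\<in>branching V E \<inter> G n. kk v - 1) = (\<Sum>v\<in>G n. kk v - 1)"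
  proof (rule sum.mono_neutral_left)
    show "\<forall>i\<in>G n - branching V E \<inter> G n. kk i - 1 = 0"
      using G_sub unfolding branching_def kk_def by auto
  qed (use G_fin in auto)
  moreover have "(\<Sum>v\<in>G n. kk v - 1) + card (G n) = card (G (Suc n))"
  proof -
    have "(\<Sum>v\<in>G n. kk v - 1) + card (G n) = (\<Sum>v\<in>G n. kk v - 1 + 1)"
      by (simp only: sum.distrib card_eq_sum)
    also have "\<dots> = (\<Sum>v\<in>G n. kk v)" proof (rule sum.cong)
      fix v assume "v \<in> G n"
      hence "kk v \<ge> 1" using kk_pos G_sub by blast
      thus "kk v - 1 + 1 = kk v" by simp
    qed simp
    finally show ?thesis using card_Suc by simp
  qed
  ultimately show ?thesis by simp
qed

end



context dtree begin

abbreviation cG where "cG n \<equiv> card (G n)"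

lemma cG_mono: "cG n \<le> cG (Suc n)"
proof -
  have "cG n = (\<Sum>p\<in>G n. 1)" by simp
  also have "\<dots> \<le> (\<Sum>p\<in>G n. kk p)" by (rule sum_mono) (use kk_pos G_sub in blast)
  finally show ?thesis using card_Suc by simp
qed

definition nxt :: "nat \<Rightarrow> (nat \<Rightarrow> 'a \<Rightarrow> complex) \<Rightarrow> nat \<Rightarrow> 'a \<Rightarrow> complex" where
  "nxt n b = (\<lambda>i u. S (b i) u / complex_of_real (sqrt (a n)))"

primrec BB :: "nat \<Rightarrow> nat \<Rightarrow> 'a \<Rightarrow> complex" where
  "BB 0 = (\<lambda>i u. if u = r then 1 else 0)"
| "BB (Suc n) = (SOME b. ON (G (Suc n)) {..<cG (Suc n)} b \<and> (\<forall>i<cG n. b i = nxt n (BB n) i))"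

lemma ip_div: "ip X (\<lambda>u. f u / c) (\<lambda>u. g u / c) = ip X f g / (c * cnj c)"
  unfolding ip_def by (simp add: sum_divide_distrib)

lemma ex_next:
  assumes "ON (G n) {..<cG n} b"
  shows "\<exists>b'. ON (G (Suc n)) {..<cG (Suc n)} b' \<and> (\<forall>i<cG n. b' i = nxt n b i)"
proof -
  have ON1: "ON (G (Suc n)) {..<cG n} (nxt n b)"
    unfolding ON_def
  proof (intro ballI)
    fix i j assume ij: "i \<in> {..<cG n}" "j \<in> {..<cG n}"
    have "ip (G (Suc n)) (nxt n b i) (nxt n b j) = complex_of_real (a n) * ip (G n) (b i) (b j) /
        (complex_of_real (sqrt (a n)) * cnj (complex_of_real (sqrt (a n))))"
      unfolding nxt_def ip_div key ..
    also have "complex_of_real (sqrt (a n)) * cnj (complex_of_real (sqrt (a n))) = complex_of_real (a n)"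
      using a_pos[of n] by (simp del: of_real_mult add: of_real_mult[symmetric])
    finally show "ip (G (Suc n)) (nxt n b i) (nxt n b j) = (if i = j then 1 else 0)"
      using assms ij a_pos[of n] by (simp add: ON_def)
  qed
  have "cG n \<le> cG (Suc n)" using ON_card_le[OF G_fin ON1] by simp
  from ON_extend[OF G_fin ON1 this] show ?thesis by blast
qed

lemma BB_ON: "ON (G n) {..<cG n} (BB n)"
proof (induction n)
  case 0
  show ?case by (simp add: ON_def ip_def)
next
  case (Suc n)
  from someI_ex[OF ex_next[OF Suc]] show ?case by simp
qed

lemma BB_Suc: "i < cG n \<Longrightarrow> BB (Suc n) i = nxt n (BB n) i"
  using someI_ex[OF ex_next[OF BB_ON[of n]]] by simp

definition coef where "coef f n i = ip (G n) f (BB n i)"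

lemma expand: "v \<in> G n \<Longrightarrow> f v = (\<Sum>i<cG n. coef f n i * BB n i v)"
  unfolding coef_def by (rule ON_complete[OF G_fin BB_ON]) auto

lemma parseval: "lev f n = (\<Sum>i<cG n. (cmod (coef f n i))\<^sup>2)"
proof -
  have "ip (G n) f f = ip (G n) (\<lambda>v. \<Sum>i<cG n. coef f n i * BB n i v) f"
    by (rule ip_cong) (use expand in auto)
  also have "\<dots> = (\<Sum>i<cG n. coef f n i * cnj (coef f n i))"
    unfolding ip_sum_left coef_def by (simp add: ip_cnj)
  also have "\<dots> = complex_of_real (\<Sum>i<cG n. (cmod (coef f n i))\<^sup>2)"
    unfolding of_real_sum complex_norm_square ..
  finally show ?thesis unfolding ip_self lev_def of_real_eq_iff .
qed

lemma coef_S_0: "coef (S f) 0 j = 0"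
  unfolding coef_def ip_def by (simp add: S_r)

lemma coef_S_Suc:
  assumes j: "j < cG (Suc n)"
  shows "coef (S f) (Suc n) j = (if j < cG n then complex_of_real (sqrt (a n)) * coef f n j else 0)"
proof -
  have "ip (G (Suc n)) (S f) (BB (Suc n) j) =
        ip (G (Suc n)) (\<lambda>u. \<Sum>i\<in>{..<cG n}. (complex_of_real (sqrt (a n)) * coef f n i) * BB (Suc n) i u) (BB (Suc n) j)"
  proof (rule ip_cong)
    fix u assume u: "u \<in> G (Suc n)"
    then obtain p where p: "p \<in> G n" "(p, u) \<in> E" by (auto simp: G_Suc)
    have "S f u = complex_of_real (wt p) * (\<Sum>i<cG n. coef f n i * BB n i p)"
      unfolding S_Suc[OF u p(2)] using expand[OF p(1)] by simp
    also have "\<dots> = (\<Sum>i<cG n. (complex_of_real (sqrt (a n)) * coef f n i) * BB (Suc n) i u)"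
      unfolding sum_distrib_left
    proof (rule sum.cong)
      fix i assume "i \<in> {..<cG n}"
      hence "BB (Suc n) i u = complex_of_real (wt p) * BB n i p / complex_of_real (sqrt (a n))"
        using BB_Suc S_Suc[OF u p(2)] by (simp add: nxt_def)
      thus "complex_of_real (wt p) * (coef f n i * BB n i p) =
            complex_of_real (sqrt (a n)) * coef f n i * BB (Suc n) i u"
        using a_pos[of n] by simp
    qed simp
    finally show "S f u = (\<Sum>i\<in>{..<cG n}. complex_of_real (sqrt (a n)) * coef f n i * BB (Suc n) i u)" by simp
  qed simp
  also have "\<dots> = (if j \<in> {..<cG n} then complex_of_real (sqrt (a n)) * coef f n j else 0)"
  proof (rule ON_expand[OF BB_ON])
    show "{..<cG n} \<subseteq> {..<cG (Suc n)}"
      using cG_mono[of n] by auto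
  qed (use j in auto)
  finally show ?thesis unfolding coef_def by simp
qed

end



context dtree begin

definition syn :: "(nat \<Rightarrow> nat \<Rightarrow> complex) \<Rightarrow> 'a \<Rightarrow> complex" where
  "syn c = (\<lambda>w. if w \<in> V then (\<Sum>i<cG (depth E r w). c (depth E r w) i * BB (depth E r w) i w) else 0)"

lemma syn_G: "w \<in> G n \<Longrightarrow> syn c w = (\<Sum>i<cG n. c n i * BB n i w)"
  unfolding syn_def using G_sub depth_eq by auto

lemma syn_out: "w \<notin> V \<Longrightarrow> syn c w = 0"
  unfolding syn_def by simp

lemma coef_syn: "j < cG n \<Longrightarrow> coef (syn c) n j = c n j"
proof -
  assume j: "j < cG n"
  have "coef (syn c) n j = ip (G n) (\<lambda>w. \<Sum>i\<in>{..<cG n}. c n i * BB n i w) (BB n j)"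
    unfolding coef_def by (rule ip_cong) (auto simp: syn_G)
  also have "\<dots> = c n j" using ON_expand[OF BB_ON _ _ order.refl, of n j "c n"] j by simp
  finally show ?thesis .
qed

lemma syn_coef: "(\<forall>v. v \<notin> V \<longrightarrow> f v = 0) \<Longrightarrow> syn (coef f) = f"
proof
  fix w assume f0: "\<forall>v. v \<notin> V \<longrightarrow> f v = 0"
  show "syn (coef f) w = f w"
  proof (cases "w \<in> V")
    case True
    then obtain n where "w \<in> G n" using V_cover by blast
    thus ?thesis using syn_G expand by simp
  qed (simp add: syn_out f0)
qed

lemma lev_syn: "lev (syn c) n = (\<Sum>i<cG n. (cmod (c n i))\<^sup>2)"
  unfolding parseval by (rule sum.cong) (auto simp: coef_syn)

lemma lev_nonneg: "lev f n \<ge> 0" unfolding lev_def by (simp add: sum_nonneg)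

lemma sumlev:
  fixes f :: "'a \<Rightarrow> complex"
  shows "(\<lambda>v. (cmod (f v))\<^sup>2) summable_on V \<longleftrightarrow> summable (lev f)"
    and "summable (lev f) \<Longrightarrow> infsum (\<lambda>v. (cmod (f v))\<^sup>2) V = suminf (lev f)"
proof -
  let ?h = "\<lambda>v. (cmod (f v))\<^sup>2"
  have disj: "disjoint_family_on G UNIV" using G_disj by (auto simp: disjoint_family_on_def)
  have hs: "\<And>n. n \<in> UNIV \<Longrightarrow> (?h has_sum lev f n) (G n)"
    unfolding lev_def using G_fin by simp
  have nn: "\<And>n y. n \<in> UNIV \<Longrightarrow> y \<in> G n \<Longrightarrow> 0 \<le> ?h y" by simp
  have "?h summable_on (\<Union>n\<in>UNIV. G n) \<longleftrightarrow> lev f summable_on UNIV"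
    by (rule summable_on_Union_iff[OF hs nn disj])
  also have "\<dots> \<longleftrightarrow> summable (lev f)"
    by (rule summable_on_UNIV_nonneg_real_iff) (rule lev_nonneg)
  finally show 1: "?h summable_on V \<longleftrightarrow> summable (lev f)" using V_eq by simp
  assume sm: "summable (lev f)"
  have inj: "inj_on snd (Sigma UNIV G)" using G_unique by (auto simp: inj_on_def)
  have im: "snd ` Sigma UNIV G = V" using V_eq by force
  have "(?h \<circ> snd) summable_on Sigma UNIV G"
    using summable_on_reindex[OF inj, of ?h] 1 sm im by simp
  hence "infsum (\<lambda>n. infsum (\<lambda>v. (?h \<circ> snd) (n, v)) (G n)) UNIV = infsum (?h \<circ> snd) (Sigma UNIV G)"
    by (rule infsum_Sigma_banach)
  also have "\<dots> = infsum ?h V" using infsum_reindex[OF inj, of ?h] im by simp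
  also have "(\<lambda>n. infsum (\<lambda>v. (?h \<circ> snd) (n, v)) (G n)) = lev f"
    using G_fin by (auto simp: lev_def)
  finally have "infsum (lev f) UNIV = infsum ?h V" .
  moreover have "lev f summable_on UNIV"
    using summable_on_UNIV_nonneg_real_iff[of "lev f"] lev_nonneg sm by blast
  hence "lev f sums infsum (lev f) UNIV" by (intro has_sum_imp_sums has_sum_infsum)
  ultimately show "infsum ?h V = suminf (lev f)" by (simp add: sums_iff)
qed

lemma l2_iff: "f \<in> l2 V \<longleftrightarrow> (\<forall>v. v \<notin> V \<longrightarrow> f v = 0) \<and> summable (lev f)"
  unfolding l2_def mem_Collect_eq sumlev(1) ..

lemma l2_norm_eq: "summable (lev f) \<Longrightarrow> l2_norm V f = sqrt (suminf (lev f))"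
  unfolding l2_norm_def by (simp only: sumlev(2))

lemma lev_S_0: "lev (S f) 0 = 0" unfolding lev_def by (simp add: S_r)

lemma lev_S_Suc: "lev (S f) (Suc n) = a n * lev f n"
proof -
  have "complex_of_real (lev (S f) (Suc n)) = complex_of_real (a n * lev f n)"
    using key[of n f f] unfolding ip_self lev_def by simp
  thus ?thesis by (simp only: of_real_eq_iff)
qed

lemma a_le: "a n \<le> q"
proof -
  have "1 * real n \<le> q * real n" using q1 by (intro mult_right_mono) auto
  hence "real n + q \<le> q * (real n + 1)" by (simp add: algebra_simps)
  thus ?thesis unfolding a_def by (simp add: divide_le_eq)
qed

lemma summable_lev_S: "summable (lev f) \<Longrightarrow> summable (lev (S f))"
proof -
  assume sm: "summable (lev f)"
  have "summable (\<lambda>n. lev (S f) (Suc n))"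
  proof (rule summable_comparison_test[OF _ summable_mult[OF sm, of q]])
    show "\<exists>N. \<forall>n\<ge>N. norm (lev (S f) (Suc n)) \<le> q * lev f n"
    proof (intro exI allI impI)
      fix n
      have "norm (lev (S f) (Suc n)) = a n * lev f n"
        unfolding lev_S_Suc using a_pos[of n] lev_nonneg[of f n] by simp
      also have "\<dots> \<le> q * lev f n" by (rule mult_right_mono[OF a_le lev_nonneg])
      finally show "norm (lev (S f) (Suc n)) \<le> q * lev f n" .
    qed
  qed
  thus ?thesis by (subst (asm) summable_Suc_iff)
qed

lemma S_l2: "f \<in> l2 V \<Longrightarrow> S f \<in> l2 V"
  unfolding l2_iff using summable_lev_S[of f] S_out[of _ f] by simp

end



lemma cmod_add_sq: "(cmod (x + y))\<^sup>2 \<le> 2 * (cmod x)\<^sup>2 + 2 * (cmod y)\<^sup>2"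
proof -
  have "cmod (x + y) \<le> cmod x + cmod y" by (rule norm_triangle_ineq)
  hence "(cmod (x + y))\<^sup>2 \<le> (cmod x + cmod y)\<^sup>2" by (simp add: power_mono)
  also have "\<dots> \<le> 2 * (cmod x)\<^sup>2 + 2 * (cmod y)\<^sup>2"
  proof -
    have "0 \<le> (cmod x - cmod y)\<^sup>2" by simp
    thus ?thesis unfolding power2_diff power2_sum by linarith
  qed
  finally show ?thesis .
qed

context dtree begin

lemma l2_add: "f \<in> l2 V \<Longrightarrow> g \<in> l2 V \<Longrightarrow> (\<lambda>v. f v + g v) \<in> l2 V"
proof -
  assume f: "f \<in> l2 V" and g: "g \<in> l2 V"
  have "summable (lev (\<lambda>v. f v + g v))"
  proof (rule summable_comparison_test[OF _ summable_add[OF summable_mult[of "lev f" 2] summable_mult[of "lev g" 2]]])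
    show "\<exists>N. \<forall>n\<ge>N. norm (lev (\<lambda>v. f v + g v) n) \<le> 2 * lev f n + 2 * lev g n"
    proof (intro exI allI impI)
      fix n
      have "norm (lev (\<lambda>v. f v + g v) n) = lev (\<lambda>v. f v + g v) n" using lev_nonneg by simp
      also have "\<dots> \<le> (\<Sum>v\<in>G n. 2 * (cmod (f v))\<^sup>2 + 2 * (cmod (g v))\<^sup>2)"
        unfolding lev_def by (rule sum_mono) (rule cmod_add_sq)
      also have "\<dots> = 2 * lev f n + 2 * lev g n" unfolding lev_def by (simp add: sum.distrib sum_distrib_left)
      finally show "norm (lev (\<lambda>v. f v + g v) n) \<le> 2 * lev f n + 2 * lev g n" .
    qed
  qed (use f g in \<open>auto simp: l2_iff\<close>)
  thus ?thesis using f g by (simp add: l2_iff)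
qed

lemma lev_scale: "lev (\<lambda>v. c * f v) n = (cmod c)\<^sup>2 * lev f n"
  unfolding lev_def by (simp add: sum_distrib_left norm_mult power_mult_distrib)

lemma l2_scale: "f \<in> l2 V \<Longrightarrow> (\<lambda>v. c * f v) \<in> l2 V"
  unfolding l2_iff lev_scale by (auto intro: summable_mult)

lemma lev_zero_iff: "lev f m = 0 \<longleftrightarrow> (\<forall>v\<in>G m. f v = 0)"
  unfolding lev_def using G_fin by (subst sum_nonneg_eq_0_iff) auto

definition Q :: "nat \<Rightarrow> ('a \<Rightarrow> complex) \<Rightarrow> real" where
  "Q n h = (\<Sum>m. (a m - a n) * lev h m)"

lemma summable_Qseq: "summable (lev h) \<Longrightarrow> summable (\<lambda>m. (a m - a n) * lev h m)"
proof -
  assume sm: "summable (lev h)"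
  show ?thesis
  proof (rule summable_comparison_test[OF _ summable_mult[OF sm, of q]])
    show "\<exists>N. \<forall>m\<ge>N. norm ((a m - a n) * lev h m) \<le> q * lev h m"
    proof (intro exI allI impI)
      fix m
      have "\<bar>a m - a n\<bar> \<le> q" using a_pos[of m] a_pos[of n] a_le[of m] a_le[of n] by linarith
      hence "\<bar>a m - a n\<bar> * lev h m \<le> q * lev h m" by (rule mult_right_mono[OF _ lev_nonneg])
      thus "norm ((a m - a n) * lev h m) \<le> q * lev h m" using lev_nonneg[of h m] by (simp add: abs_mult)
    qed
  qed
qed

lemma Q_norm:
  assumes h: "h \<in> l2 V"
  shows "(l2_norm V (S h))\<^sup>2 - a n * (l2_norm V h)\<^sup>2 = Q n h"
proof -
  have sm: "summable (lev h)" using h by (simp add: l2_iff)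
  have smS: "summable (lev (S h))" using summable_lev_S[OF sm] .
  have "(l2_norm V (S h))\<^sup>2 = suminf (lev (S h))"
    unfolding l2_norm_eq[OF smS] using suminf_nonneg[OF smS lev_nonneg] by simp
  also have "\<dots> = (\<Sum>m. lev (S h) (Suc m))" using suminf_split_head[OF smS] lev_S_0 by simp
  also have "\<dots> = (\<Sum>m. a m * lev h m)" unfolding lev_S_Suc ..
  finally have 1: "(l2_norm V (S h))\<^sup>2 = (\<Sum>m. a m * lev h m)" .
  have 2: "(l2_norm V h)\<^sup>2 = suminf (lev h)"
    unfolding l2_norm_eq[OF sm] using suminf_nonneg[OF sm lev_nonneg] by simp
  have sma: "summable (\<lambda>m. a m * lev h m)"
  proof (rule summable_comparison_test[OF _ summable_mult[OF sm, of q]])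
    show "\<exists>N. \<forall>m\<ge>N. norm (a m * lev h m) \<le> q * lev h m"
    proof (intro exI allI impI)
      fix m
      show "norm (a m * lev h m) \<le> q * lev h m"
        using mult_right_mono[OF a_le lev_nonneg, of m h] a_pos[of m] lev_nonneg[of h m] by simp
    qed
  qed
  have "(\<Sum>m. a m * lev h m) - a n * suminf (lev h) = (\<Sum>m. a m * lev h m - a n * lev h m)"
    using suminf_diff[OF sma summable_mult[OF sm, of "a n"]] suminf_mult[OF sm, of "a n"] by simp
  also have "\<dots> = Q n h" unfolding Q_def by (simp add: algebra_simps)
  finally show ?thesis using 1 2 by simp
qed

lemma Q_char:
  assumes f: "f \<in> l2 V"
  shows "(\<forall>g\<in>l2 V. Q n (\<lambda>v. f v + g v) = Q n g) \<longleftrightarrow> (\<forall>v. v \<notin> G n \<longrightarrow> f v = 0)"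
proof
  assume supp: "\<forall>v. v \<notin> G n \<longrightarrow> f v = 0"
  show "\<forall>g\<in>l2 V. Q n (\<lambda>v. f v + g v) = Q n g"
  proof (intro ballI)
    fix g
    have "(\<lambda>m. (a m - a n) * lev (\<lambda>v. f v + g v) m) = (\<lambda>m. (a m - a n) * lev g m)"
    proof fix m show "(a m - a n) * lev (\<lambda>v. f v + g v) m = (a m - a n) * lev g m"
    proof (cases "m = n")
      case False
      hence "\<forall>v\<in>G m. f v = 0" using supp G_disj by blast
      thus ?thesis unfolding lev_def by simp
    qed simp
    qed
    thus "Q n (\<lambda>v. f v + g v) = Q n g" unfolding Q_def by simp
  qed
next
  assume H: "\<forall>g\<in>l2 V. Q n (\<lambda>v. f v + g v) = Q n g"
  have sm: "summable (lev f)" and f0: "\<forall>v. v \<notin> V \<longrightarrow> f v = 0" using f by (auto simp: l2_iff)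
  have Q0: "Q n f = 0"
  proof -
    have l0: "lev (\<lambda>_::'a. 0::complex) = (\<lambda>_. 0)" by (simp add: lev_def fun_eq_iff)
    have "(\<lambda>_::'a. 0::complex) \<in> l2 V" by (simp add: l2_iff l0)
    from H[rule_format, OF this] show ?thesis by (simp add: Q_def lev_def)
  qed
  have zm: "\<forall>v\<in>G m. f v = 0" if mn: "m \<noteq> n" for m
  proof -
    define g where "g = (\<lambda>v. if v \<in> G m then f v else 0)"
    have levg: "lev g = (\<lambda>j. if j = m then lev f m else 0)"
    proof
      fix j show "lev g j = (if j = m then lev f m else 0)"
        using G_disj[of j m] unfolding lev_def g_def by (auto intro!: sum.neutral sum.cong)
    qed
    have gl2: "g \<in> l2 V"
      unfolding l2_iff levg using G_sub summable_single[of m "\<lambda>_. lev f m"]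
      by (auto simp: g_def)
    have levfg: "lev (\<lambda>v. f v + g v) j = lev f j + (if j = m then 3 * lev f m else 0)" for j
    proof (cases "j = m")
      case True
      have "lev (\<lambda>v. f v + g v) j = (\<Sum>v\<in>G m. (cmod (2 * f v))\<^sup>2)"
        unfolding lev_def True g_def by (intro sum.cong) auto
      also have "\<dots> = 4 * lev f m" unfolding lev_def by (simp add: norm_mult power_mult_distrib sum_distrib_left)
      finally show ?thesis using True by simp
    next
      case False
      hence "lev (\<lambda>v. f v + g v) j = lev f j"
        using G_disj[of j m] unfolding lev_def g_def by (intro sum.cong) auto
      thus ?thesis using False by simp
    qed
    define D where "D = (a m - a n) * lev f m"
    have s1: "(\<lambda>j. (a j - a n) * lev f j) sums Q n f"
      unfolding Q_def by (rule summable_sums[OF summable_Qseq[OF sm]])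
    have "(\<lambda>j. (a j - a n) * lev f j + (if j = m then 3 * D else 0)) sums (Q n f + 3 * D)"
      by (rule sums_add[OF s1 sums_single])
    moreover have "(\<lambda>j. (a j - a n) * lev f j + (if j = m then 3 * D else 0)) = (\<lambda>j. (a j - a n) * lev (\<lambda>v. f v + g v) j)"
      unfolding levfg D_def by (auto simp: algebra_simps)
    ultimately have "Q n (\<lambda>v. f v + g v) = Q n f + 3 * D" unfolding Q_def by (simp add: sums_iff)
    moreover have "Q n g = D"
    proof -
      have "(\<lambda>j. if j = m then D else 0) sums D" by (rule sums_single)
      moreover have "(\<lambda>j. if j = m then D else 0) = (\<lambda>j. (a j - a n) * lev g j)"
        unfolding levg D_def by auto
      ultimately show ?thesis unfolding Q_def by (simp add: sums_iff)
    qed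
    ultimately have "D = 0" using H gl2 Q0 by simp
    moreover have "a m \<noteq> a n" using a_inj mn by blast
    ultimately have "lev f m = 0" unfolding D_def by simp
    thus ?thesis using lev_zero_iff by blast
  qed
  show "\<forall>v. v \<notin> G n \<longrightarrow> f v = 0"
  proof (intro allI impI)
    fix v assume "v \<notin> G n"
    show "f v = 0"
    proof (cases "v \<in> V")
      case True
      then obtain m where "v \<in> G m" using V_cover by blast
      thus ?thesis using zm \<open>v \<notin> G n\<close> by (cases "m = n") auto
    qed (use f0 in auto)
  qed
qed

end



lemma ip_add_left: "ip X (\<lambda>x. f x + g x) h = ip X f h + ip X g h"
  unfolding ip_def by (simp add: distrib_right sum.distrib)

lemma ip_scale_left: "ip X (\<lambda>x. c * f x) h = c * ip X f h"
  unfolding ip_def by (simp add: sum_distrib_left mult.assoc)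

lemma polar_pt:
  fixes u v :: complex
  shows "4 * (u * cnj v) = (u + v) * cnj (u + v) - (u + (-1) * v) * cnj (u + (-1) * v)
      + \<i> * ((u + \<i> * v) * cnj (u + \<i> * v)) - \<i> * ((u + (-\<i>) * v) * cnj (u + (-\<i>) * v))"
  by (simp add: algebra_simps)

lemma polar:
  "4 * ip X f g = ip X (\<lambda>x. f x + g x) (\<lambda>x. f x + g x) - ip X (\<lambda>x. f x + (-1) * g x) (\<lambda>x. f x + (-1) * g x)
     + \<i> * ip X (\<lambda>x. f x + \<i> * g x) (\<lambda>x. f x + \<i> * g x) - \<i> * ip X (\<lambda>x. f x + (-\<i>) * g x) (\<lambda>x. f x + (-\<i>) * g x)"
  unfolding ip_def sum_distrib_left sum_subtractf[symmetric] sum.distrib[symmetric]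
  by (rule sum.cong[OF refl]) (rule polar_pt)

context dtree begin

lemma lev_supp: "(\<forall>v. v \<notin> G n \<longrightarrow> h v = 0) \<Longrightarrow> lev h = (\<lambda>j. if j = n then lev h n else 0)"
proof
  fix j assume s: "\<forall>v. v \<notin> G n \<longrightarrow> h v = 0"
  show "lev h j = (if j = n then lev h n else 0)"
  proof (cases "j = n")
    case False
    hence "\<forall>v\<in>G j. h v = 0" using s G_disj[of j n] by blast
    thus ?thesis using False by (simp add: lev_def)
  qed simp
qed

lemma supp_l2: "(\<forall>v. v \<notin> G n \<longrightarrow> h v = 0) \<Longrightarrow> h \<in> l2 V"
proof -
  assume s: "\<forall>v. v \<notin> G n \<longrightarrow> h v = 0"
  have "summable (lev h)" by (subst lev_supp[OF s]) (rule summable_single)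
  moreover have "\<forall>v. v \<notin> V \<longrightarrow> h v = 0" using s G_sub by blast
  ultimately show ?thesis by (simp add: l2_iff)
qed

lemma supp_norm: "(\<forall>v. v \<notin> G n \<longrightarrow> h v = 0) \<Longrightarrow> (l2_norm V h)\<^sup>2 = lev h n"
proof -
  assume s: "\<forall>v. v \<notin> G n \<longrightarrow> h v = 0"
  have sm: "summable (lev h)" by (subst lev_supp[OF s]) (rule summable_single)
  have "suminf (lev h) = lev h n"
    by (subst lev_supp[OF s]) (rule sums_unique[symmetric], rule sums_single)
  thus ?thesis unfolding l2_norm_eq[OF sm] using lev_nonneg by simp
qed

lemma syn_cong: "(\<And>n i. i < cG n \<Longrightarrow> c n i = d n i) \<Longrightarrow> syn c = syn d"
  unfolding syn_def by (intro ext if_cong refl sum.cong) auto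

lemma syn_add: "syn (\<lambda>n i. c n i + d n i) = (\<lambda>w. syn c w + syn d w)"
  unfolding syn_def by (auto simp: distrib_right sum.distrib)

lemma syn_scale: "syn (\<lambda>n i. k * c n i) = (\<lambda>w. k * syn c w)"
  unfolding syn_def by (auto simp: sum_distrib_left mult.assoc)

lemma coef_add: "coef (\<lambda>v. f v + g v) = (\<lambda>n i. coef f n i + coef g n i)"
  unfolding coef_def by (simp add: ip_add_left)

lemma coef_scale: "coef (\<lambda>v. k * f v) = (\<lambda>n i. k * coef f n i)"
  unfolding coef_def by (simp add: ip_scale_left)

end

locale two = T1: dtree V1 E1 r1 q + T2: dtree V2 E2 r2 q
  for V1 :: "'a set" and E1 r1 and V2 :: "'b set" and E2 r2 and q
begin

lemma a_eq: "T1.a = T2.a" by (simp add: fun_eq_iff T1.a_def T2.a_def)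

end



context two begin

definition U where "U f = T2.syn (T1.coef f)"

lemma if_dir:
  assumes eqc: "\<And>n. T1.cG n = T2.cG n"
  shows "unitarily_equivalent V1 T1.S V2 T2.S"
proof -
  define U' where "U' g = T1.syn (T2.coef g)" for g
  have levU: "T2.lev (U f) n = T1.lev f n" for f n
    unfolding U_def T2.lev_syn T1.parseval eqc ..
  have l2U: "U f \<in> l2 V2" if "f \<in> l2 V1" for f
    using that unfolding T1.l2_iff T2.l2_iff levU[abs_def, symmetric]
    by (auto simp: U_def T2.syn_out)
  have levU': "T1.lev (U' g) n = T2.lev g n" for g n
    unfolding U'_def T1.lev_syn T2.parseval eqc ..
  have l2U': "U' g \<in> l2 V1" if "g \<in> l2 V2" for g
  proof -
    have "T1.lev (U' g) = T2.lev g" by (rule ext) (rule levU')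
    moreover have "\<forall>v. v \<notin> V1 \<longrightarrow> U' g v = 0" by (simp add: U'_def T1.syn_out)
    ultimately show ?thesis using that by (simp add: T1.l2_iff T2.l2_iff)
  qed
  have inv1: "U' (U f) = f" if "f \<in> l2 V1" for f
  proof -
    have "U' (U f) = T1.syn (T1.coef f)"
      unfolding U'_def U_def by (rule T1.syn_cong) (simp add: T2.coef_syn eqc)
    also have "\<dots> = f" using that by (intro T1.syn_coef) (simp add: T1.l2_iff)
    finally show ?thesis .
  qed
  have inv2: "U (U' g) = g" if "g \<in> l2 V2" for g
  proof -
    have "U (U' g) = T2.syn (T2.coef g)"
      unfolding U'_def U_def by (rule T2.syn_cong) (simp add: T1.coef_syn eqc[symmetric])
    also have "\<dots> = g" using that by (intro T2.syn_coef) (simp add: T2.l2_iff)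
    finally show ?thesis .
  qed
  have bij: "bij_betw U (l2 V1) (l2 V2)"
    by (rule bij_betw_byWitness[of _ U']) (use inv1 inv2 l2U l2U' in auto)
  have add: "U (\<lambda>v. f v + g v) = (\<lambda>w. U f w + U g w)" for f g
    unfolding U_def T1.coef_add T2.syn_add ..
  have scale: "U (\<lambda>v. c * f v) = (\<lambda>w. c * U f w)" for c f
    unfolding U_def T1.coef_scale T2.syn_scale ..
  have norm: "l2_norm V2 (U f) = l2_norm V1 f" if "f \<in> l2 V1" for f
    using that l2U[OF that] unfolding T1.l2_iff T2.l2_iff
    by (simp add: T1.l2_norm_eq T2.l2_norm_eq levU[abs_def])
  have inter: "U (T1.S f) = T2.S (U f)" for f
  proof
    fix w
    show "U (T1.S f) w = T2.S (U f) w"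
    proof (cases "w \<in> V2")
      case False thus ?thesis by (simp add: U_def T2.syn_out T2.S_out)
    next
      case True
      then obtain n where w: "w \<in> T2.G n" using T2.V_cover by blast
      show ?thesis
      proof (cases n)
        case 0
        hence "w = r2" using w by simp
        moreover have r2G: "r2 \<in> T2.G 0" by simp
        ultimately show ?thesis by (simp add: U_def T2.syn_G[OF r2G] T1.coef_S_0 T2.S_r)
      next
        case (Suc m)
        then obtain p where p: "p \<in> T2.G m" "(p, w) \<in> E2" using w by (auto simp: T2.G_Suc)
        have w': "w \<in> T2.G (Suc m)" using w Suc by simp
        have "U (T1.S f) w = (\<Sum>i<T2.cG (Suc m). T1.coef (T1.S f) (Suc m) i * T2.BB (Suc m) i w)"
          unfolding U_def using T2.syn_G[OF w'] .
        also have "\<dots> = (\<Sum>i<T2.cG (Suc m). (if i < T2.cG m then complex_of_real (sqrt (T2.a m)) * T1.coef f m i * T2.BB (Suc m) i w else 0))"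
        proof (rule sum.cong[OF refl])
          fix i assume i: "i \<in> {..<T2.cG (Suc m)}"
          have c: "T1.coef (T1.S f) (Suc m) i = (if i < T1.cG m then complex_of_real (sqrt (T1.a m)) * T1.coef f m i else 0)"
            by (rule T1.coef_S_Suc) (use i eqc[of "Suc m"] in simp)
          show "T1.coef (T1.S f) (Suc m) i * T2.BB (Suc m) i w = (if i < T2.cG m then complex_of_real (sqrt (T2.a m)) * T1.coef f m i * T2.BB (Suc m) i w else 0)"
            unfolding c eqc[of m] by simp
        qed
        also have "\<dots> = (\<Sum>i<T2.cG m. (if i < T2.cG m then complex_of_real (sqrt (T2.a m)) * T1.coef f m i * T2.BB (Suc m) i w else 0))"
          by (rule sum.mono_neutral_right) (use T2.cG_mono[of m] in auto)
        also have "\<dots> = (\<Sum>i<T2.cG m. complex_of_real (sqrt (T2.a m)) * T1.coef f m i * T2.BB (Suc m) i w)"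
          by (rule sum.cong) auto
        also have "\<dots> = (\<Sum>i<T2.cG m. complex_of_real (T2.wt p) * (T1.coef f m i * T2.BB m i p))"
        proof (intro sum.cong refl)
          fix i assume "i \<in> {..<T2.cG m}"
          hence "T2.BB (Suc m) i w = complex_of_real (T2.wt p) * T2.BB m i p / complex_of_real (sqrt (T2.a m))"
            using T2.BB_Suc T2.S_Suc[OF w' p(2)] by (simp add: T2.nxt_def)
          thus "complex_of_real (sqrt (T2.a m)) * T1.coef f m i * T2.BB (Suc m) i w =
                complex_of_real (T2.wt p) * (T1.coef f m i * T2.BB m i p)"
            using T2.a_pos[of m] by simp
        qed
        also have "\<dots> = T2.S (U f) w"
          unfolding T2.S_Suc[OF w' p(2)] U_def T2.syn_G[OF p(1)] sum_distrib_left ..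
        finally show ?thesis .
      qed
    qed
  qed
  show ?thesis unfolding unitarily_equivalent_def
    by (intro exI[of _ U] conjI ballI allI) (simp_all only: bij add scale norm inter)
qed

end



context two begin

lemma ue_sym:
  assumes "unitarily_equivalent V1 T1.S V2 T2.S"
  shows "unitarily_equivalent V2 T2.S V1 T1.S"
proof -
  obtain U where bij: "bij_betw U (l2 V1) (l2 V2)"
    and add: "\<forall>f\<in>l2 V1. \<forall>g\<in>l2 V1. U (\<lambda>v. f v + g v) = (\<lambda>w. U f w + U g w)"
    and scale: "\<forall>f\<in>l2 V1. \<forall>c. U (\<lambda>v. c * f v) = (\<lambda>w. c * U f w)"
    and norm: "\<forall>f\<in>l2 V1. l2_norm V2 (U f) = l2_norm V1 f"
    and inter: "\<forall>f\<in>l2 V1. U (T1.S f) = T2.S (U f)"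
    using assms unfolding unitarily_equivalent_def by blast
  define U' where "U' = inv_into (l2 V1) U"
  have bij': "bij_betw U' (l2 V2) (l2 V1)" unfolding U'_def by (rule bij_betw_inv_into[OF bij])
  have UU': "g \<in> l2 V2 \<Longrightarrow> U (U' g) = g" for g
    unfolding U'_def using bij by (simp add: bij_betw_def f_inv_into_f)
  have U'U: "f \<in> l2 V1 \<Longrightarrow> U' (U f) = f" for f
    unfolding U'_def using bij by (simp add: bij_betw_def inv_into_f_f)
  have U'l2: "g \<in> l2 V2 \<Longrightarrow> U' g \<in> l2 V1" for g using bij_betwE[OF bij'] by blast
  show ?thesis unfolding unitarily_equivalent_def
  proof (intro exI[of _ U'] conjI ballI allI)
    show "bij_betw U' (l2 V2) (l2 V1)" by (rule bij')
  next
    fix f g assume f: "f \<in> l2 V2" and g: "g \<in> l2 V2"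
    have "U (\<lambda>v. U' f v + U' g v) = (\<lambda>w. f w + g w)"
      using add U'l2[OF f] U'l2[OF g] UU'[OF f] UU'[OF g] by simp
    hence "U' (U (\<lambda>v. U' f v + U' g v)) = U' (\<lambda>w. f w + g w)" by simp
    thus "U' (\<lambda>v. f v + g v) = (\<lambda>w. U' f w + U' g w)"
      using U'U[OF T1.l2_add[OF U'l2[OF f] U'l2[OF g]]] by simp
  next
    fix f c assume f: "f \<in> l2 V2"
    have "U (\<lambda>v. c * U' f v) = (\<lambda>w. c * f w)"
      using scale U'l2[OF f] UU'[OF f] by simp
    hence "U' (U (\<lambda>v. c * U' f v)) = U' (\<lambda>w. c * f w)" by simp
    thus "U' (\<lambda>v. c * f v) = (\<lambda>w. c * U' f w)"
      using U'U[OF T1.l2_scale[OF U'l2[OF f]]] by simp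
  next
    fix f assume f: "f \<in> l2 V2"
    show "l2_norm V1 (U' f) = l2_norm V2 f"
      using norm U'l2[OF f] UU'[OF f] by metis
  next
    fix f assume f: "f \<in> l2 V2"
    have "U (T1.S (U' f)) = T2.S f" using inter U'l2[OF f] UU'[OF f] by metis
    hence "U' (U (T1.S (U' f))) = U' (T2.S f)" by simp
    thus "U' (T2.S f) = T1.S (U' f)"
      using U'U[OF T1.S_l2[OF U'l2[OF f]]] by simp
  qed
qed

lemma ue_le:
  assumes "unitarily_equivalent V1 T1.S V2 T2.S"
  shows "T1.cG n \<le> T2.cG n"
proof -
  obtain U where bij: "bij_betw U (l2 V1) (l2 V2)"
    and add: "\<forall>f\<in>l2 V1. \<forall>g\<in>l2 V1. U (\<lambda>v. f v + g v) = (\<lambda>w. U f w + U g w)"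
    and scale: "\<forall>f\<in>l2 V1. \<forall>c. U (\<lambda>v. c * f v) = (\<lambda>w. c * U f w)"
    and norm: "\<forall>f\<in>l2 V1. l2_norm V2 (U f) = l2_norm V1 f"
    and inter: "\<forall>f\<in>l2 V1. U (T1.S f) = T2.S (U f)"
    using assms unfolding unitarily_equivalent_def by blast
  have Ul2: "f \<in> l2 V1 \<Longrightarrow> U f \<in> l2 V2" for f using bij by (auto simp: bij_betw_def)
  have QU: "T2.Q n (U x) = T1.Q n x" if x: "x \<in> l2 V1" for x
  proof -
    have "T2.Q n (U x) = (l2_norm V2 (T2.S (U x)))\<^sup>2 - T2.a n * (l2_norm V2 (U x))\<^sup>2"
      using T2.Q_norm[OF Ul2[OF x]] by simp
    also have "\<dots> = (l2_norm V1 (T1.S x))\<^sup>2 - T1.a n * (l2_norm V1 x)\<^sup>2"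
    proof -
      have e1: "l2_norm V2 (T2.S (U x)) = l2_norm V1 (T1.S x)" using inter x norm T1.S_l2[OF x] by metis
      have e2: "l2_norm V2 (U x) = l2_norm V1 x" using norm x by blast
      have e3: "T2.a n = T1.a n" by (simp add: T1.a_def T2.a_def)
      show ?thesis using e1 e2 e3 by simp
    qed
    also have "\<dots> = T1.Q n x" using T1.Q_norm[OF x] by simp
    finally show ?thesis .
  qed
  define L1 where "L1 = {h \<in> l2 V1. \<forall>v. v \<notin> T1.G n \<longrightarrow> h v = 0}"
  have mapL: "\<forall>v. v \<notin> T2.G n \<longrightarrow> U h v = 0" if h: "h \<in> L1" for h
  proof -
    have hl2: "h \<in> l2 V1" and hs: "\<forall>v. v \<notin> T1.G n \<longrightarrow> h v = 0" using h by (auto simp: L1_def)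
    have H1: "\<forall>g\<in>l2 V1. T1.Q n (\<lambda>v. h v + g v) = T1.Q n g"
      using T1.Q_char[OF hl2] hs by blast
    have "\<forall>g\<in>l2 V2. T2.Q n (\<lambda>v. U h v + g v) = T2.Q n g"
    proof
      fix g assume g: "g \<in> l2 V2"
      then obtain g' where g': "g' \<in> l2 V1" "g = U g'" using bij by (auto simp: bij_betw_def)
      have "(\<lambda>v. U h v + g v) = U (\<lambda>v. h v + g' v)" using add hl2 g' by simp
      hence "T2.Q n (\<lambda>v. U h v + g v) = T1.Q n (\<lambda>v. h v + g' v)"
        using QU[OF T1.l2_add[OF hl2 g'(1)]] by simp
      also have "\<dots> = T1.Q n g'" using H1 g' by blast
      also have "\<dots> = T2.Q n g" using QU[OF g'(1)] g' by simp
      finally show "T2.Q n (\<lambda>v. U h v + g v) = T2.Q n g" .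
    qed
    thus ?thesis using T2.Q_char[OF Ul2[OF hl2]] by blast
  qed
  have levL: "T2.lev (U h) n = T1.lev h n" if h: "h \<in> L1" for h
  proof -
    have "T2.lev (U h) n = (l2_norm V2 (U h))\<^sup>2" using T2.supp_norm[OF mapL[OF h]] by simp
    also have "\<dots> = (l2_norm V1 h)\<^sup>2" using norm h by (simp add: L1_def)
    also have "\<dots> = T1.lev h n" using T1.supp_norm h by (simp add: L1_def)
    finally show ?thesis .
  qed
  have ipL: "ip (T2.G n) (U h) (U h) = ip (T1.G n) h h" if "h \<in> L1" for h
    using levL[OF that] by (simp add: ip_self T1.lev_def T2.lev_def)
  have L1_comb: "(\<lambda>x. f x + c * g x) \<in> L1" if "f \<in> L1" "g \<in> L1" for f g c
    using that T1.l2_add T1.l2_scale by (auto simp: L1_def)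
  have U_comb: "U (\<lambda>x. f x + c * g x) = (\<lambda>x. U f x + c * U g x)" if "f \<in> L1" "g \<in> L1" for f g c
  proof -
    have "f \<in> l2 V1" "g \<in> l2 V1" using that by (auto simp: L1_def)
    thus ?thesis using add scale T1.l2_scale by simp
  qed
  have ipU: "ip (T2.G n) (U f) (U g) = ip (T1.G n) f g" if f: "f \<in> L1" and g: "g \<in> L1" for f g
  proof -
    have "4 * ip (T2.G n) (U f) (U g) = 4 * ip (T1.G n) f g"
      unfolding polar
      using ipL[OF L1_comb[OF f g, of 1]] ipL[OF L1_comb[OF f g, of "-1"]]
        ipL[OF L1_comb[OF f g, of "\<i>"]] ipL[OF L1_comb[OF f g, of "-\<i>"]]
      unfolding U_comb[OF f g] by simp
    thus ?thesis by simp
  qed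
  define e :: "'a \<Rightarrow> 'a \<Rightarrow> complex" where "e = (\<lambda>v x. if x = v then (1::complex) else 0)"
  have eL: "e v \<in> L1" if "v \<in> T1.G n" for v
  proof -
    have s: "\<forall>x. x \<notin> T1.G n \<longrightarrow> e v x = 0" using that by (auto simp: e_def)
    show ?thesis using T1.supp_l2[OF s] s by (simp add: L1_def)
  qed
  have "ON (T2.G n) (T1.G n) (\<lambda>v. U (e v))"
    unfolding ON_def
  proof (intro ballI)
    fix v w assume v: "v \<in> T1.G n" and w: "w \<in> T1.G n"
    have "ip (T2.G n) (U (e v)) (U (e w)) = ip (T1.G n) (e v) (e w)" by (rule ipU[OF eL[OF v] eL[OF w]])
    also have "\<dots> = cnj (e w v)" unfolding e_def by (rule ip_delta[OF T1.G_fin v])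
    finally show "ip (T2.G n) (U (e v)) (U (e w)) = (if v = w then 1 else 0)" by (simp add: e_def)
  qed
  from ON_card_le[OF T2.G_fin this T1.G_fin] show ?thesis .
qed

end



theorem mainTheorem1:
  fixes V1 :: "'a set" and E1 :: "('a \<times> 'a) set" and r1 :: 'a
    and V2 :: "'b set" and E2 :: "('b \<times> 'b) set" and r2 :: 'b
    and q :: nat
  assumes "q \<ge> 2"
    and "rooted_tree V1 E1 r1" "leafless V1 E1" "locally_finite V1 E1"
    and "rooted_tree V2 E2 r2" "leafless V2 E2" "locally_finite V2 E2"
  shows "unitarily_equivalent V1 (dirichlet_shift V1 E1 r1 (real q))
                              V2 (dirichlet_shift V2 E2 r2 (real q))
     \<longleftrightarrow> (\<forall>n::nat.
            (\<Sum>v\<in>branching V1 E1 \<inter> Chi_pow E1 n {r1}. card (Chi E1 v) - 1)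
          = (\<Sum>v\<in>branching V2 E2 \<inter> Chi_pow E2 n {r2}. card (Chi E2 v) - 1))"
proof -
  have q1: "real q > 1" using assms(1) by simp
  interpret P: two V1 E1 r1 V2 E2 r2 "real q"
    by (unfold_locales) (use assms q1 in auto)
  interpret Q: two V2 E2 r2 V1 E1 r1 "real q"
    by (unfold_locales) (use assms q1 in auto)
  have S1: "P.T1.S = dirichlet_shift V1 E1 r1 (real q)" by (simp add: P.T1.S_def)
  have S2: "P.T2.S = dirichlet_shift V2 E2 r2 (real q)" by (simp add: P.T2.S_def)
  have bs1: "(\<Sum>v\<in>branching V1 E1 \<inter> Chi_pow E1 n {r1}. card (Chi E1 v) - 1) = P.T1.cG (Suc n) - P.T1.cG n" for n
    using P.T1.branch_sum[of n] by (simp add: P.T1.G_def P.T1.kk_def)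
  have bs2: "(\<Sum>v\<in>branching V2 E2 \<inter> Chi_pow E2 n {r2}. card (Chi E2 v) - 1) = P.T2.cG (Suc n) - P.T2.cG n" for n
    using P.T2.branch_sum[of n] by (simp add: P.T2.G_def P.T2.kk_def)
  have cond: "(\<forall>n. P.T1.cG (Suc n) - P.T1.cG n = P.T2.cG (Suc n) - P.T2.cG n) \<longleftrightarrow> (\<forall>n. P.T1.cG n = P.T2.cG n)"
  proof
    assume H: "\<forall>n. P.T1.cG (Suc n) - P.T1.cG n = P.T2.cG (Suc n) - P.T2.cG n"
    show "\<forall>n. P.T1.cG n = P.T2.cG n"
    proof
      fix n show "P.T1.cG n = P.T2.cG n"
      proof (induction n)
        case 0 show ?case by simp
      next
        case (Suc n)
        thus ?case using H[rule_format, of n] P.T1.cG_mono[of n] P.T2.cG_mono[of n] by linarith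
      qed
    qed
  qed simp
  show ?thesis unfolding bs1 bs2 cond S1[symmetric] S2[symmetric]
  proof
    assume ue: "unitarily_equivalent V1 P.T1.S V2 P.T2.S"
    show "\<forall>n. P.T1.cG n = P.T2.cG n"
    proof
      fix n
      have "P.T1.cG n \<le> P.T2.cG n" using P.ue_le[OF ue] .
      moreover have "P.T2.cG n \<le> P.T1.cG n" using Q.ue_le[OF P.ue_sym[OF ue]] .
      ultimately show "P.T1.cG n = P.T2.cG n" by simp
    qed
  next
    assume "\<forall>n. P.T1.cG n = P.T2.cG n"
    thus "unitarily_equivalent V1 P.T1.S V2 P.T2.S" using P.if_dir by blast
  qed
qed



end
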